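(* Let $n \geq 0$ be an integer and consider Nim on the hypercube $Q_{2n+1}$ in which every edge has weight $1$, with the playing piece $\Delta$ starting at the vertex $\emptyset$. Then the first player $P_1$ has a strategy which guarantees that, throughout the game, $\Delta$ only ever lies on vertices at levels $\emptyset$, $1$ and $2$, i.e. on vertices whose labelling subset $X \subseteq \{1,\dots,2n+1\}$ has $|X| \leq 2$.
   Context: Nim on a graph: two players agree on a finite simple undirected graph $G$ whose edges carry positive integer weights, and a starting vertex on which a playing piece $\Delta$ is placed. Players $P_1$ (who moves first) and $P_2$ alternate. On a turn, the player chooses an edge of positive weight incident with the vertex currently holding $\Delta$, lowers that edge's weight by a positive integer amount, and moves $\Delta$ to the other endpoint of that edge. Edges of weight $0$ are no longer playable. A player who cannot move (no playable edge is incident with $\Delta$) loses. With unit weight (every edge has weight $1$), each edge can be traversed at most once in total. The hypercube $Q_m$ has as vertices the subsets $X \subseteq \{1,\dots,m\}$ (equivalently binary $m$-tuples), two vertices being adjacent iff they differ in exactly one element; the level of vertex $X$ is $|X|$, and $\emptyset$ is the empty set. *)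

theory Defs
  imports Main
begin

definition hc_adj :: "nat \<Rightarrow> nat set \<Rightarrow> nat set \<Rightarrow> bool" where
  "hc_adj m X Y \<longleftrightarrow> X \<subseteq> {1..m} \<and> Y \<subseteq> {1..m} \<and> card ((X - Y) \<union> (Y - X)) = 1"

definition edges_of :: "nat set list \<Rightarrow> nat set set list" where
  "edges_of vs = map (\<lambda>(a, b). {a, b}) (zip vs (tl vs))"

text \<open>A history of unit-weight Nim on Q_m started at the empty set: the list of
positions of the piece; each move goes along a hypercube edge and, since all
weights are 1, every edge is used at most once.\<close>
definition valid_history :: "nat \<Rightarrow> nat set list \<Rightarrow> bool" where
  "valid_history m vs \<longleftrightarrow> vs \<noteq> [] \<and> hd vs = {} \<and>
     (\<forall>i. i + 1 < length vs \<longrightarrow> hc_adj m (vs ! i) (vs ! (i + 1))) \<and>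
     distinct (edges_of vs)"

text \<open>A strategy for P1 maps a history (at which P1 is to move) to the next
vertex. Moves number 0, 2, 4, ... (0-based) are made by P1, i.e. P1 is to move
when the history has odd length.\<close>
definition consistent_P1 :: "nat \<Rightarrow> (nat set list \<Rightarrow> nat set) \<Rightarrow> nat set list \<Rightarrow> bool" where
  "consistent_P1 m \<sigma> vs \<longleftrightarrow> valid_history m vs \<and>
     (\<forall>i. i + 1 < length vs \<longrightarrow> even i \<longrightarrow> vs ! (i + 1) = \<sigma> (take (i + 1) vs))"

definition legal_P1_strategy :: "nat \<Rightarrow> (nat set list \<Rightarrow> nat set) \<Rightarrow> bool" where
  "legal_P1_strategy m \<sigma> \<longleftrightarrow>
     (\<forall>vs. consistent_P1 m \<sigma> vs \<longrightarrow> odd (length vs) \<longrightarrow>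
        (\<exists>w. valid_history m (vs @ [w])) \<longrightarrow> valid_history m (vs @ [\<sigma> vs]))"

end

theory Submission
  imports Defs
begin

lemma edges_of_Nil[simp]: "edges_of [] = []" by (simp add: edges_of_def)
lemma edges_of_single[simp]: "edges_of [x] = []" by (simp add: edges_of_def)
lemma edges_of_Cons2[simp]: "edges_of (x # y # ys) = {x, y} # edges_of (y # ys)"
  by (simp add: edges_of_def)

lemma length_edges_of[simp]: "length (edges_of vs) = length vs - 1"
  by (simp add: edges_of_def)

lemma edges_of_nth: "i + 1 < length vs \<Longrightarrow> edges_of vs ! i = {vs!i, vs!(i+1)}"
proof -
  assume a: "i + 1 < length vs"
  have "edges_of vs ! i = (\<lambda>(a, b). {a, b}) (zip vs (tl vs) ! i)"
    unfolding edges_of_def using a by (intro nth_map) simp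
  also have "zip vs (tl vs) ! i = (vs ! i, tl vs ! i)" using a by (intro nth_zip) auto
  also have "tl vs ! i = vs ! (i+1)" using a by (simp add: nth_tl)
  finally show ?thesis by simp
qed

lemma edges_of_snoc: "vs \<noteq> [] \<Longrightarrow> edges_of (vs @ [w]) = edges_of vs @ [{last vs, w}]"
proof (induction vs)
  case Nil then show ?case by simp
next
  case (Cons x xs)
  then show ?case by (cases xs) auto
qed

lemma hc_adj_cases:
  assumes "hc_adj m X Y"
  shows "(\<exists>y. y \<notin> X \<and> Y = insert y X) \<or> (\<exists>x. x \<notin> Y \<and> X = insert x Y)"
proof -
  from assms have "card ((X - Y) \<union> (Y - X)) = 1" unfolding hc_adj_def by (elim conjE)
  then obtain z where z: "(X - Y) \<union> (Y - X) = {z}" by (rule card_1_singletonE)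
  have zz: "\<And>t. (t \<in> X \<and> t \<notin> Y) \<or> (t \<in> Y \<and> t \<notin> X) \<longleftrightarrow> t = z"
    using z by (metis (no_types, lifting) Diff_iff Un_iff singleton_iff)
  show ?thesis
  proof (cases "z \<in> X")
    case True
    then have a: "z \<notin> Y" using zz by blast
    have "X = insert z Y"
    proof (rule set_eqI)
      fix t show "t \<in> X \<longleftrightarrow> t \<in> insert z Y" using zz[of t] True a by auto
    qed
    then show ?thesis using a by blast
  next
    case False
    then have a: "z \<in> Y" using zz by blast
    have "Y = insert z X"
    proof (rule set_eqI)
      fix t show "t \<in> Y \<longleftrightarrow> t \<in> insert z X" using zz[of t] False a by auto
    qed
    then show ?thesis using False by blast
  qed
qed

lemma hc_adj_fin: "hc_adj m X Y \<Longrightarrow> finite X \<and> finite Y"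
  unfolding hc_adj_def by (meson finite_atLeastAtMost finite_subset)

lemma hc_adj_card: "hc_adj m X Y \<Longrightarrow> card Y = card X + 1 \<or> card X = card Y + 1"
proof -
  assume h: "hc_adj m X Y"
  have f: "finite X" "finite Y" using hc_adj_fin[OF h] by auto
  from hc_adj_cases[OF h] show ?thesis
  proof
    assume "\<exists>y. y \<notin> X \<and> Y = insert y X"
    then obtain y where "y \<notin> X" "Y = insert y X" by blast
    then show ?thesis using f by simp
  next
    assume "\<exists>y. y \<notin> Y \<and> X = insert y Y"
    then obtain y where "y \<notin> Y" "X = insert y Y" by blast
    then show ?thesis using f by simp
  qed
qed

lemma hc_adj_sym: "hc_adj m X Y \<Longrightarrow> hc_adj m Y X"
  unfolding hc_adj_def by (simp add: Un_commute)

lemma hc_adj_neq: "hc_adj m X Y \<Longrightarrow> X \<noteq> Y"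
  unfolding hc_adj_def by auto

lemma walk_deg:
  assumes "vs \<noteq> []" "\<forall>i. i+1 < length vs \<longrightarrow> vs!i \<noteq> vs!(i+1)"
  shows "length (filter (\<lambda>e. v \<in> e) (edges_of vs)) + (if hd vs = v then 1 else 0)
          + (if last vs = v then 1 else 0) = 2 * count_list vs v"
  using assms
proof (induction vs rule: rev_induct)
  case Nil then show ?case by simp
next
  case (snoc w vs)
  show ?case
  proof (cases "vs = []")
    case True then show ?thesis by simp
  next
    case False
    have adj: "\<forall>i. i+1 < length vs \<longrightarrow> vs!i \<noteq> vs!(i+1)"
    proof (intro allI impI)
      fix i assume "i+1 < length vs"
      then show "vs!i \<noteq> vs!(i+1)" using snoc.prems(2)[rule_format, of i]
        by (simp add: nth_append)
    qed
    note IH = snoc.IH[OF False adj]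
    have "last vs \<noteq> w"
      using snoc.prems(2)[rule_format, of "length vs - 1"] False
      by (simp add: nth_append last_conv_nth)
    have hd: "hd (vs @ [w]) = hd vs" using False by simp
    have fl: "length (filter (\<lambda>e. v \<in> e) (edges_of (vs @ [w])))
        = length (filter (\<lambda>e. v \<in> e) (edges_of vs)) + (if last vs = v \<or> w = v then 1 else 0)"
      using False by (simp add: edges_of_snoc)
    show ?thesis using IH \<open>last vs \<noteq> w\<close> unfolding hd fl by (simp split: if_splits)
  qed
qed

lemma valid_subset:
  assumes "valid_history m vs" "i < length vs"
  shows "vs ! i \<subseteq> {1..m}"
proof (cases i)
  case 0
  then show ?thesis using assms by (cases vs) (auto simp: valid_history_def)
next
  case (Suc k)
  then have "hc_adj m (vs ! k) (vs ! (k+1))" using assms unfolding valid_history_def by auto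
  then show ?thesis using Suc unfolding hc_adj_def by auto
qed

lemma valid_snoc:
  assumes "valid_history m vs" "hc_adj m (last vs) w" "{last vs, w} \<notin> set (edges_of vs)"
  shows "valid_history m (vs @ [w])"
proof -
  have ne: "vs \<noteq> []" using assms(1) by (simp add: valid_history_def)
  have "\<forall>i. i + 1 < length (vs @ [w]) \<longrightarrow> hc_adj m ((vs @ [w]) ! i) ((vs @ [w]) ! (i + 1))"
  proof (intro allI impI)
    fix i assume i: "i + 1 < length (vs @ [w])"
    show "hc_adj m ((vs @ [w]) ! i) ((vs @ [w]) ! (i + 1))"
    proof (cases "i + 1 < length vs")
      case True
      then show ?thesis using assms(1) by (simp add: valid_history_def nth_append)
    next
      case False
      then have e: "i = length vs - 1" using i by simp
      then show ?thesis using assms(2) ne by (simp add: nth_append last_conv_nth)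
    qed
  qed
  moreover have "distinct (edges_of (vs @ [w]))"
    using assms(1,3) ne by (simp add: edges_of_snoc valid_history_def)
  ultimately show ?thesis using assms(1) ne by (simp add: valid_history_def)
qed

lemma valid_prefix:
  assumes "valid_history m (vs @ [w])" "vs \<noteq> []"
  shows "valid_history m vs \<and> hc_adj m (last vs) w \<and> {last vs, w} \<notin> set (edges_of vs)"
proof -
  have adj: "\<forall>i. i + 1 < length vs \<longrightarrow> hc_adj m (vs ! i) (vs ! (i + 1))"
  proof (intro allI impI)
    fix i assume "i + 1 < length vs"
    then show "hc_adj m (vs ! i) (vs ! (i + 1))"
      using assms(1) unfolding valid_history_def
      by (metis (no_types, lifting) Suc_eq_plus1 Suc_lessD butlast_snoc length_append_singleton
          less_SucI nth_butlast)
  qed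
  have "hc_adj m (last vs) w"
    using assms unfolding valid_history_def
    apply (elim conjE) apply (drule spec[of _ "length vs - 1"])
    by (simp add: nth_append last_conv_nth)
  moreover have "distinct (edges_of vs)" "{last vs, w} \<notin> set (edges_of vs)"
    using assms by (simp_all add: edges_of_snoc valid_history_def)
  ultimately show ?thesis using adj assms by (simp add: valid_history_def)
qed

lemma consistent_prefix:
  assumes "consistent_P1 m \<sigma> (vs @ [w])" "vs \<noteq> []"
  shows "consistent_P1 m \<sigma> vs"
proof -
  have "valid_history m vs" using valid_prefix assms unfolding consistent_P1_def by blast
  moreover have "\<forall>i. i + 1 < length vs \<longrightarrow> even i \<longrightarrow> vs ! (i + 1) = \<sigma> (take (i + 1) vs)"
  proof (intro allI impI)
    fix i assume i: "i + 1 < length vs" "even i"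
    then have "(vs @ [w]) ! (i + 1) = \<sigma> (take (i + 1) (vs @ [w]))"
      using assms(1) unfolding consistent_P1_def by auto
    then show "vs ! (i + 1) = \<sigma> (take (i + 1) vs)" using i by (simp add: nth_append)
  qed
  ultimately show ?thesis by (simp add: consistent_P1_def)
qed

definition pat :: "nat set list \<Rightarrow> bool" where
  "pat vs \<longleftrightarrow> (\<forall>i<length vs. if odd i then card (vs!i) = 1 else (card (vs!i) = 0 \<or> card (vs!i) = 2))"

lemma pat_odd: "pat vs \<Longrightarrow> i < length vs \<Longrightarrow> odd i \<Longrightarrow> card (vs!i) = 1"
  unfolding pat_def by (metis (full_types))

lemma pat_even: "pat vs \<Longrightarrow> i < length vs \<Longrightarrow> even i \<Longrightarrow> card (vs!i) = 0 \<or> card (vs!i) = 2"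
  unfolding pat_def by (metis (full_types))

lemma nb2:
  assumes "hc_adj m Y X" "card Y = 1" "X = {b, a}" "a \<noteq> b"
  shows "Y = {a} \<or> Y = {b}"
proof -
  have f: "finite X" "finite Y" using hc_adj_fin[OF assms(1)] by auto
  have cX: "card X = 2" using assms(3,4) by simp
  from hc_adj_cases[OF assms(1)] have "Y \<subseteq> X"
  proof
    assume "\<exists>y. y \<notin> Y \<and> X = insert y Y" then show ?thesis by blast
  next
    assume "\<exists>x. x \<notin> X \<and> Y = insert x X"
    then obtain x where "x \<notin> X" "Y = insert x X" by blast
    then have "card Y = 3" using f cX by simp
    then show ?thesis using assms(2) by simp
  qed
  moreover obtain y where "Y = {y}" using assms(2) card_1_singletonE by blast
  ultimately show ?thesis using assms(3) by blast
qed

lemma distinct_nth_eq: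
  "distinct xs \<Longrightarrow> i < length xs \<Longrightarrow> k < length xs \<Longrightarrow> xs ! i = xs ! k \<Longrightarrow> i = k"
  by (simp add: nth_eq_iff_index_eq)

lemma exists_move:
  assumes V: "valid_history m vs" and P: "pat vs" and O: "odd (length vs)" and M: "m = 2*n+1"
  shows "\<exists>w. valid_history m (vs @ [w]) \<and> card w \<le> 1"
proof -
  have ne: "vs \<noteq> []" using V by (simp add: valid_history_def)
  define j where "j = length vs - 1"
  have jl: "j < length vs" "even j" using ne O by (auto simp: j_def)
  have lastj: "last vs = vs ! j" using ne by (simp add: j_def last_conv_nth)
  have hd0: "vs ! 0 = {}" using V ne by (simp add: valid_history_def hd_conv_nth)
  have adjall: "\<And>i. i+1 < length vs \<Longrightarrow> hc_adj m (vs!i) (vs!(i+1))"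
    using V by (simp add: valid_history_def)
  have D: "distinct (edges_of vs)" using V by (simp add: valid_history_def)
  define X where "X = vs ! j"
  have Xs: "X \<subseteq> {1..m}" using valid_subset[OF V jl(1)] by (simp add: X_def)
  then have fX: "finite X" by (meson finite_atLeastAtMost finite_subset)
  have cX: "card X = 0 \<or> card X = 2" using pat_even[OF P jl] by (simp add: X_def)
  show ?thesis
  proof (cases "card X = 0")
    case True
    then have X0: "X = {}" using fX by simp
    have adjneq: "\<forall>i. i+1 < length vs \<longrightarrow> vs!i \<noteq> vs!(i+1)"
      using adjall hc_adj_neq by blast
    define F where "F = filter (\<lambda>e. {} \<in> e) (edges_of vs)"
    have wd: "length F + (if hd vs = {} then 1 else 0) + (if last vs = {} then 1 else 0)
               = 2 * count_list vs {}"
      unfolding F_def by (rule walk_deg[OF ne adjneq])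
    have "hd vs = {}" "last vs = {}" using hd0 ne X0 lastj X_def by (auto simp: hd_conv_nth)
    then have evF: "even (length F)" using wd by presburger
    have dF: "distinct F" using D by (simp add: F_def)
    have cF: "card (set F) = length F" using distinct_card[OF dF] .
    have "\<exists>c\<in>{1..m}. {{}, {c}} \<notin> set (edges_of vs)"
    proof (rule ccontr)
      assume "\<not> ?thesis"
      then have all: "\<forall>c\<in>{1..m}. {{}, {c}} \<in> set (edges_of vs)" by blast
      have "set F = (\<lambda>c. {{}, {c}}) ` {1..m}"
      proof
        show "set F \<subseteq> (\<lambda>c. {{}, {c}}) ` {1..m}"
        proof
          fix e assume "e \<in> set F"
          then have e1: "e \<in> set (edges_of vs)" "{} \<in> e" by (auto simp: F_def)
          then obtain i where i: "i < length (edges_of vs)" "edges_of vs ! i = e"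
            by (auto simp: in_set_conv_nth)
          then have il: "i + 1 < length vs" by simp
          have ee: "e = {vs!i, vs!(i+1)}" using edges_of_nth[OF il] i by simp
          have ad: "hc_adj m (vs!i) (vs!(i+1))" using adjall[OF il] .
          have sub: "vs!i \<subseteq> {1..m}" "vs!(i+1) \<subseteq> {1..m}" using ad by (auto simp: hc_adj_def)
          have "\<exists>y\<in>{1..m}. e = {{}, {y}}"
          proof (cases "vs!i = {}")
            case True
            from hc_adj_cases[OF ad] True obtain y where "vs!(i+1) = {y}" by auto
            then show ?thesis using ee True sub by auto
          next
            case False
            then have "vs!(i+1) = {}" using ee e1 by auto
            with hc_adj_cases[OF ad] obtain y where "vs!i = {y}" by auto
            then show ?thesis using ee \<open>vs!(i+1) = {}\<close> sub by auto
          qed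
          then show "e \<in> (\<lambda>c. {{}, {c}}) ` {1..m}" by blast
        qed
      next
        show "(\<lambda>c. {{}, {c}}) ` {1..m} \<subseteq> set F" using all by (auto simp: F_def)
      qed
      moreover have "inj_on (\<lambda>c. {{}, {c}}) {1..m}"
      proof (rule inj_onI)
        fix c d :: nat assume "{{}, {c}} = {{}, {d}}"
        then have "{c} \<in> {{}, {d}}" by blast
        then show "c = d" by auto
      qed
      ultimately have "card (set F) = m" by (simp add: card_image)
      then show False using evF cF M by simp
    qed
    then obtain c where c: "c \<in> {1..m}" "{{}, {c}} \<notin> set (edges_of vs)" by blast
    have "hc_adj m {} {c}" using c by (simp add: hc_adj_def)
    then have "valid_history m (vs @ [{c}])"
      using valid_snoc[OF V] c lastj X_def X0 by simp
    then show ?thesis by fastforce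
  next
    case False
    then have cX2: "card X = 2" using cX by simp
    have j0: "j \<noteq> 0"
    proof
      assume "j = 0" then have "X = {}" using hd0 X_def by simp
      then show False using cX2 by simp
    qed
    then have j2: "j \<ge> 2" using jl(2) by presburger
    define u where "u = vs ! (j - 1)"
    have cu: "card u = 1" using pat_odd[OF P, of "j-1"] jl j2 by (simp add: u_def)
    have adu: "hc_adj m u X" using adjall[of "j-1"] jl j2 by (simp add: u_def X_def)
    obtain a where ua: "u = {a}" using cu card_1_singletonE by blast
    from hc_adj_cases[OF adu] obtain b where b: "b \<notin> u" "X = insert b u"
    proof
      assume "\<exists>x. x \<notin> X \<and> u = insert x X"
      then obtain x where "x \<notin> X" "u = insert x X" by blast
      then have "card u = 3" using fX cX2 by simp
      then show ?thesis using cu by simp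
    qed (blast)
    have ab: "a \<noteq> b" "X = {b, a}" using b ua by auto
    have edj: "edges_of vs ! (j - 1) = {{a}, X}"
      using edges_of_nth[of "j-1" vs] jl j2 ua unfolding u_def X_def by simp
    have lej: "length (edges_of vs) = j" by (simp add: j_def)
    have noX: "\<And>q. q < j \<Longrightarrow> vs ! q \<noteq> X"
    proof
      fix q assume q: "q < j" "vs ! q = X"
      have qe: "even q"
      proof (rule ccontr)
        assume "\<not> even q" then have "card (vs!q) = 1" using pat_odd[OF P, of q] q jl by simp
        then show False using q cX2 by simp
      qed
      have q0: "q \<noteq> 0"
      proof
        assume "q = 0" then have "X = {}" using hd0 q by simp
        then show False using cX2 by simp
      qed
      have c1: "card (vs ! (q-1)) = 1" using pat_odd[OF P, of "q-1"] q jl q0 qe by simp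
      have c2: "card (vs ! (q+1)) = 1" using pat_odd[OF P, of "q+1"] q jl q0 qe by simp
      have a1: "hc_adj m (vs ! (q-1)) X" using adjall[of "q-1"] q jl q0 by simp
      have a2: "hc_adj m (vs ! (q+1)) X" using hc_adj_sym[OF adjall[of q]] q jl by simp
      have n1: "vs ! (q-1) = {a} \<or> vs ! (q-1) = {b}" using nb2[OF a1 c1 ab(2) ab(1)] .
      have n2: "vs ! (q+1) = {a} \<or> vs ! (q+1) = {b}" using nb2[OF a2 c2 ab(2) ab(1)] .
      have e1: "edges_of vs ! (q-1) = {vs ! (q-1), X}"
        using edges_of_nth[of "q-1" vs] q jl q0 by simp
      have e2: "edges_of vs ! q = {X, vs ! (q+1)}"
        using edges_of_nth[of q vs] q jl by simp
      have "edges_of vs ! (q-1) \<noteq> edges_of vs ! q"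
      proof
        assume h: "edges_of vs ! (q-1) = edges_of vs ! q"
        have l1: "q - 1 < length (edges_of vs)" "q < length (edges_of vs)" using q lej by auto
        have "q - 1 = q" using distinct_nth_eq[OF D l1 h] .
        then show False using q0 by simp
      qed
      then have dd: "vs ! (q-1) \<noteq> vs ! (q+1)" using e1 e2 by auto
      show False
      proof (cases "vs ! (q-1) = {a}")
        case True
        then have "edges_of vs ! (q-1) = edges_of vs ! (j-1)" using e1 edj by simp
        then have "q - 1 = j - 1" using distinct_nth_eq[OF D, of "q-1" "j-1"] q j2 lej by simp
        then show False using q q0 by simp
      next
        case False
        then have "vs ! (q+1) = {a}" using n1 n2 dd by auto
        then have "edges_of vs ! q = edges_of vs ! (j-1)" using e2 edj by auto
        then have "q = j - 1" using distinct_nth_eq[OF D, of q "j-1"] q j2 lej by simp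
        then show False using qe jl(2) j2 by simp
      qed
    qed
    have notin: "{X, {b}} \<notin> set (edges_of vs)"
    proof
      assume "{X, {b}} \<in> set (edges_of vs)"
      then obtain i where i: "i < j" "edges_of vs ! i = {X, {b}}"
        unfolding in_set_conv_nth lej by blast
      have "edges_of vs ! i = {vs!i, vs!(i+1)}" using edges_of_nth[of i vs] i jl by simp
      then have eq: "{vs!i, vs!(i+1)} = {X, {b}}" using i by simp
      have Xb: "X \<noteq> {b}" using cX2 by auto
      from eq have "(vs!i = X \<and> vs!(i+1) = {b}) \<or> (vs!i = {b} \<and> vs!(i+1) = X)"
        by (auto simp: doubleton_eq_iff)
      then show False
      proof
        assume "vs!i = X \<and> vs!(i+1) = {b}" then show False using noX i by blast
      next
        assume h: "vs!i = {b} \<and> vs!(i+1) = X"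
        show False
        proof (cases "i + 1 < j")
          case True then show False using noX h by blast
        next
          case False
          then have "i = j - 1" using i by simp
          then have "vs ! i = {a}" using ua u_def by simp
          then show False using h ab by auto
        qed
      qed
    qed
    have "X - {b} = {a}" using ab by auto
    then have "hc_adj m X {b}" using Xs ab by (auto simp: hc_adj_def)
    then have "valid_history m (vs @ [{b}])"
      using valid_snoc[OF V] notin lastj X_def by simp
    then show ?thesis by fastforce
  qed
qed

definition strat :: "nat \<Rightarrow> nat set list \<Rightarrow> nat set" where
  "strat m vs = (if \<exists>w. valid_history m (vs @ [w]) \<and> card w \<le> 1
                 then SOME w. valid_history m (vs @ [w]) \<and> card w \<le> 1
                 else SOME w. valid_history m (vs @ [w]))"

lemma strat_legal: "\<exists>w. valid_history m (vs @ [w]) \<Longrightarrow> valid_history m (vs @ [strat m vs])"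
proof -
  assume h: "\<exists>w. valid_history m (vs @ [w])"
  show ?thesis
  proof (cases "\<exists>w. valid_history m (vs @ [w]) \<and> card w \<le> 1")
    case True
    then show ?thesis unfolding strat_def using someI_ex[OF True] by simp
  next
    case False
    have "strat m vs = (SOME w. valid_history m (vs @ [w]))"
      unfolding strat_def using False by (rule if_not_P)
    then show ?thesis using someI_ex[OF h] by simp
  qed
qed

lemma strat_card: "\<exists>w. valid_history m (vs @ [w]) \<and> card w \<le> 1 \<Longrightarrow> card (strat m vs) \<le> 1"
proof -
  assume h: "\<exists>w. valid_history m (vs @ [w]) \<and> card w \<le> 1"
  then show ?thesis unfolding strat_def using someI_ex[OF h] by simp
qed

lemma invariant:
  "consistent_P1 (2*n+1) (strat (2*n+1)) vs \<Longrightarrow> pat vs"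
proof (induction vs rule: rev_induct)
  case Nil then show ?case by (simp add: pat_def)
next
  case (snoc w vs)
  let ?m = "2*n+1"
  show ?case
  proof (cases "vs = []")
    case True
    then have "w = {}" using snoc.prems by (simp add: consistent_P1_def valid_history_def)
    then show ?thesis using True by (simp add: pat_def)
  next
    case False
    have C: "consistent_P1 ?m (strat ?m) vs" using consistent_prefix[OF snoc.prems False] .
    have P: "pat vs" using snoc.IH[OF C] .
    have V: "valid_history ?m vs" using C by (simp add: consistent_P1_def)
    have VP: "hc_adj ?m (last vs) w" using valid_prefix[of ?m vs w] snoc.prems False
      by (simp add: consistent_P1_def)
    define L where "L = length vs"
    have L0: "L > 0" using False by (simp add: L_def)
    have lastL: "last vs = vs ! (L - 1)" using False by (simp add: L_def last_conv_nth)
    have cw: "if odd L then card w = 1 else (card w = 0 \<or> card w = 2)"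
    proof (cases "odd L")
      case True
      have ev: "even (L - 1)" "(L-1) + 1 < length (vs @ [w])" using True L0 by (auto simp: L_def)
      have "(vs @ [w]) ! ((L-1) + 1) = strat ?m (take ((L-1) + 1) (vs @ [w]))"
        using snoc.prems ev unfolding consistent_P1_def by blast
      moreover have "(L-1)+1 = length vs" using L0 by (simp add: L_def)
      ultimately have ws: "w = strat ?m vs" by simp
      have "\<exists>w. valid_history ?m (vs @ [w]) \<and> card w \<le> 1"
        using exists_move[OF V P _ refl] True by (simp add: L_def)
      then have c1: "card w \<le> 1" using strat_card ws by simp
      have "card (last vs) = 0 \<or> card (last vs) = 2"
        using pat_even[OF P, of "L-1"] True L0 lastL by (simp add: L_def)
      then have "card w = 1" using hc_adj_card[OF VP] c1 by auto
      then show ?thesis using True by simp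
    next
      case False
      have "card (last vs) = 1"
        using pat_odd[OF P, of "L-1"] False L0 lastL by (simp add: L_def)
      then have "card w = 0 \<or> card w = 2" using hc_adj_card[OF VP] by auto
      then show ?thesis using False by simp
    qed
    show ?thesis unfolding pat_def
    proof (intro allI impI)
      fix i assume i: "i < length (vs @ [w])"
      show "if odd i then card ((vs @ [w]) ! i) = 1
            else card ((vs @ [w]) ! i) = 0 \<or> card ((vs @ [w]) ! i) = 2"
      proof (cases "i < L")
        case True
        then show ?thesis using P unfolding pat_def L_def by (simp add: nth_append)
      next
        case False
        then have "i = L" using i by (simp add: L_def)
        then show ?thesis using cw by (simp add: L_def)
      qed
    qed
  qed
qed

theorem mainTheorem1:
  fixes n :: nat
  shows "\<exists>\<sigma>. legal_P1_strategy (2 * n + 1) \<sigma> \<and>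
           (\<forall>vs. consistent_P1 (2 * n + 1) \<sigma> vs \<longrightarrow> (\<forall>X \<in> set vs. card X \<le> 2))"
proof (intro exI conjI)
  show "legal_P1_strategy (2 * n + 1) (strat (2 * n + 1))"
    unfolding legal_P1_strategy_def using strat_legal by blast
  show "\<forall>vs. consistent_P1 (2 * n + 1) (strat (2 * n + 1)) vs \<longrightarrow> (\<forall>X \<in> set vs. card X \<le> 2)"
  proof (intro allI impI ballI)
    fix vs X assume c: "consistent_P1 (2 * n + 1) (strat (2 * n + 1)) vs" and X: "X \<in> set vs"
    have P: "pat vs" using invariant[OF c] .
    obtain i where i: "i < length vs" "vs ! i = X" using X by (auto simp: in_set_conv_nth)
    show "card X \<le> 2"
    proof (cases "odd i")
      case True then show ?thesis using pat_odd[OF P i(1)] i by simp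
    next
      case False then show ?thesis using pat_even[OF P i(1)] i by auto
    qed
  qed
qed

end
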